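(* If Algorithm 1 is run for any integer $T\ge\frac{6w}{\alpha\epsilon}$ iterations and $\bar y=\frac1T\sum_{k=0}^{T-1}p(x_k)$, then $\mathbb{E}[\mathbf 1^T\bar y]\le(1+5\epsilon)\,\mathrm{OPT}$.
   Context: Standing setup: $A\in\mathbb{R}^{m\times n}_{\ge 0}$ has no zero column and is normalized so that $\min_{i\in[n]}\|A_{:i}\|_\infty=1$, where $A_{:i}$ denotes the $i$-th column. The packing LP is $\max\{\mathbf 1^Tx: x\ge 0,\ Ax\le \mathbf 1\}$ with optimal value $\mathrm{OPT}$. $\epsilon\in(0,1/2]$. $\log$ is natural unless written $\log_2$. $\mu=\frac{\epsilon}{4\log(nm/\epsilon)}$, $p_j(x)=\exp\big(\frac{1}{\mu}((Ax)_j-1)\big)$, $p(x)=(p_1(x),\dots,p_m(x))$, $f_\mu(x)=-\mathbf 1^Tx+\mu\sum_jp_j(x)$, $\nabla_i f_\mu(x)=-1+\sum_jA_{ji}p_j(x)$. Algorithm 1 with $T$ iterations: set $\alpha=\mu/20$, $w=\lceil\log_2(1/\epsilon)\rceil$, $x_0[i]=\frac{1-\epsilon/2}{n\|A_{:i}\|_\infty}$. For $k=0,\dots,T-1$: choose $t_k\in\{0,\dots,w-1\}$ uniformly at random, independently of the past; writing $g_i=\nabla_i f_\mu(x_k)$, define $\xi_k[i]=0$ if $|g_i|\le\epsilon$, $\xi_k[i]=g_i$ if $\epsilon<|g_i|\le 1$, $\xi_k[i]=1$ if $g_i>1$; $\xi^{(t)}_k[i]=\xi_k[i]$ if $\epsilon2^t<|\xi_k[i]|\le\epsilon2^{t+1}$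 and $0$ otherwise; $x_{k+1}[i]=x_k[i]\exp(-\alpha\,\xi^{(t_k)}_k[i])$. *)

theory Defs
  imports Complex_Main
begin

text \<open>Matrices are functions nat => nat => real; A j i is the entry in row j (< m),
column i (< n). Vectors are nat => real, only indices below the dimension matter.\<close>

definition matvec :: "(nat \<Rightarrow> nat \<Rightarrow> real) \<Rightarrow> nat \<Rightarrow> (nat \<Rightarrow> real) \<Rightarrow> nat \<Rightarrow> real" where
  "matvec A n x j = (\<Sum>i<n. A j i * x i)"

definition colnorm :: "(nat \<Rightarrow> nat \<Rightarrow> real) \<Rightarrow> nat \<Rightarrow> nat \<Rightarrow> real" where
  "colnorm A m i = Max ((\<lambda>j. \<bar>A j i\<bar>) ` {..<m})"

definition packing_OPT :: "(nat \<Rightarrow> nat \<Rightarrow> real) \<Rightarrow> nat \<Rightarrow> nat \<Rightarrow> real" where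
  "packing_OPT A m n = Sup {(\<Sum>i<n. x i) | x. (\<forall>i<n. 0 \<le> x i) \<and> (\<forall>j<m. matvec A n x j \<le> 1)}"

definition mu :: "nat \<Rightarrow> nat \<Rightarrow> real \<Rightarrow> real" where
  "mu n m \<epsilon> = \<epsilon> / (4 * ln (real n * real m / \<epsilon>))"

definition pvec :: "(nat \<Rightarrow> nat \<Rightarrow> real) \<Rightarrow> nat \<Rightarrow> nat \<Rightarrow> real \<Rightarrow> (nat \<Rightarrow> real) \<Rightarrow> nat \<Rightarrow> real" where
  "pvec A m n \<epsilon> x j = exp ((1 / mu n m \<epsilon>) * (matvec A n x j - 1))"

definition grad_f :: "(nat \<Rightarrow> nat \<Rightarrow> real) \<Rightarrow> nat \<Rightarrow> nat \<Rightarrow> real \<Rightarrow> (nat \<Rightarrow> real) \<Rightarrow> nat \<Rightarrow> real" where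
  "grad_f A m n \<epsilon> x i = -1 + (\<Sum>j<m. A j i * pvec A m n \<epsilon> x j)"

text \<open>Truncated gradient entry xi_k[i] (g is always >= -1).\<close>
definition xi_trunc :: "real \<Rightarrow> real \<Rightarrow> real" where
  "xi_trunc \<epsilon> g = (if \<bar>g\<bar> \<le> \<epsilon> then 0 else if g > 1 then 1 else g)"

definition xi_bucket :: "real \<Rightarrow> nat \<Rightarrow> real \<Rightarrow> real" where
  "xi_bucket \<epsilon> t v = (if \<epsilon> * 2 ^ t < \<bar>v\<bar> \<and> \<bar>v\<bar> \<le> \<epsilon> * 2 ^ (t + 1) then v else 0)"

definition alpha :: "nat \<Rightarrow> nat \<Rightarrow> real \<Rightarrow> real" where
  "alpha n m \<epsilon> = mu n m \<epsilon> / 20"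

definition wpar :: "real \<Rightarrow> nat" where
  "wpar \<epsilon> = nat \<lceil>log 2 (1 / \<epsilon>)\<rceil>"

definition x_init :: "(nat \<Rightarrow> nat \<Rightarrow> real) \<Rightarrow> nat \<Rightarrow> nat \<Rightarrow> real \<Rightarrow> nat \<Rightarrow> real" where
  "x_init A m n \<epsilon> i = (1 - \<epsilon> / 2) / (real n * colnorm A m i)"

definition alg_step :: "(nat \<Rightarrow> nat \<Rightarrow> real) \<Rightarrow> nat \<Rightarrow> nat \<Rightarrow> real \<Rightarrow> nat \<Rightarrow> (nat \<Rightarrow> real) \<Rightarrow> nat \<Rightarrow> real" where
  "alg_step A m n \<epsilon> t x i =
     x i * exp (- alpha n m \<epsilon> * xi_bucket \<epsilon> t (xi_trunc \<epsilon> (grad_f A m n \<epsilon> x i)))"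

text \<open>Iterate x_k, given the list ts of random choices t_0, t_1, ...\<close>
fun alg_iter :: "(nat \<Rightarrow> nat \<Rightarrow> real) \<Rightarrow> nat \<Rightarrow> nat \<Rightarrow> real \<Rightarrow> nat list \<Rightarrow> nat \<Rightarrow> nat \<Rightarrow> real" where
  "alg_iter A m n \<epsilon> ts 0 = x_init A m n \<epsilon>"
| "alg_iter A m n \<epsilon> ts (Suc k) = alg_step A m n \<epsilon> (ts ! k) (alg_iter A m n \<epsilon> ts k)"

definition ybar_total :: "(nat \<Rightarrow> nat \<Rightarrow> real) \<Rightarrow> nat \<Rightarrow> nat \<Rightarrow> real \<Rightarrow> nat \<Rightarrow> nat list \<Rightarrow> real" where
  "ybar_total A m n \<epsilon> T ts =
     (\<Sum>j<m. (1 / real T) * (\<Sum>k<T. pvec A m n \<epsilon> (alg_iter A m n \<epsilon> ts k) j))"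

text \<open>Expectation over t_0,...,t_{T-1} i.i.d. uniform on {0..w-1}: the uniform
average over all length-T sequences with entries < w.\<close>
definition expected_ybar_total :: "(nat \<Rightarrow> nat \<Rightarrow> real) \<Rightarrow> nat \<Rightarrow> nat \<Rightarrow> real \<Rightarrow> nat \<Rightarrow> real" where
  "expected_ybar_total A m n \<epsilon> T =
     (\<Sum>ts \<in> {ts. set ts \<subseteq> {..<wpar \<epsilon>} \<and> length ts = T}. ybar_total A m n \<epsilon> T ts)
       / real (wpar \<epsilon>) ^ T"

end

theory Submission
  imports Defs
begin

lemma ln2_ge: "1/2 \<le> ln (2::real)"
proof -
  have "exp (1/2::real) \<le> 1 + 1/2 + (1/2)^2" by (rule exp_bound) auto
  hence "exp (1/2::real) \<le> 2" by (simp add: power2_eq_square)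
  hence "ln (exp (1/2::real)) \<le> ln 2" by (subst ln_le_cancel_iff) auto
  thus ?thesis by simp
qed

lemma exp_quad: assumes "\<bar>z::real\<bar> \<le> 1" shows "exp z \<le> 1 + z + z^2"
proof (cases "z \<ge> 0")
  case True thus ?thesis using assms exp_bound by auto
next
  case False
  have "1 - z \<le> exp (-z)" using exp_ge_add_one_self[of "-z"] by simp
  hence "exp z \<le> 1/(1-z)" using False by (simp add: exp_minus field_simps)
  also have "\<dots> \<le> 1 + z + z^2"
  proof -
    have "(1-z)*(1+z+z^2) = 1 - z^3" by (simp add: algebra_simps power2_eq_square power3_eq_cube)
    moreover have "z^3 \<le> 0" using False by (simp add: odd_power_less_zero less_imp_le)
    ultimately have "1 \<le> (1-z)*(1+z+z^2)" by simp
    thus ?thesis using False by (simp add: divide_le_eq mult.commute)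
  qed
  finally show ?thesis .
qed

lemma exp_ge_e: "exp (1::real) \<ge> 64/27"
proof -
  have "exp (1/3::real) \<ge> 1 + 1/3" using exp_ge_add_one_self[of "1/3::real"] by simp
  hence "exp (1/3::real)^3 \<ge> (4/3)^3" by (intro power_mono) auto
  moreover have "exp (1/3::real)^3 = exp (of_nat 3 * (1/3))" by (rule exp_of_nat_mult[symmetric])
  moreover have "(of_nat 3 * (1/3::real)) = 1" by simp
  ultimately show ?thesis by (simp add: power3_eq_cube)
qed

lemma ln_le_div_e: assumes "0 < (y::real)" shows "ln y \<le> y / exp 1"
proof -
  have "ln (y / exp 1) \<le> y / exp 1 - 1" by (rule ln_le_minus_one) (use assms in simp)
  moreover have "ln (y / exp 1) = ln y - 1" using assms by (simp add: ln_div)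
  ultimately show ?thesis by simp
qed

lemma wcs: fixes w y :: "nat \<Rightarrow> real"
  assumes "\<And>i. i \<in> I \<Longrightarrow> 0 \<le> w i"
  shows "(\<Sum>i\<in>I. w i * y i)^2 \<le> (\<Sum>i\<in>I. w i) * (\<Sum>i\<in>I. w i * (y i)^2)"
proof -
  have 0: "0 \<le> (\<Sum>i\<in>I. \<Sum>k\<in>I. w i * w k * (y i - y k)^2)"
    using assms by (intro sum_nonneg mult_nonneg_nonneg) auto
  have 1: "(\<Sum>i\<in>I. \<Sum>k\<in>I. w i * w k * (y i - y k)^2) = (\<Sum>i\<in>I. \<Sum>k\<in>I. w i * (w k * (y k)^2) + w k * (w i * (y i)^2) - 2 * ((w i * y i) * (w k * y k)))"
    by (intro sum.cong refl) (simp add: power2_eq_square algebra_simps)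
  have 2: "(\<Sum>i\<in>I. \<Sum>k\<in>I. w i * (w k * (y k)^2) + w k * (w i * (y i)^2) - 2 * ((w i * y i) * (w k * y k))) = (\<Sum>i\<in>I. \<Sum>k\<in>I. w i * (w k * (y k)^2)) + (\<Sum>i\<in>I. \<Sum>k\<in>I. w k * (w i * (y i)^2))
       - 2 * (\<Sum>i\<in>I. \<Sum>k\<in>I. (w i * y i) * (w k * y k))"
    by (simp only: sum_subtractf sum.distrib sum_distrib_left)
  have 3: "(\<Sum>i\<in>I. \<Sum>k\<in>I. w i * (w k * (y k)^2)) = (\<Sum>i\<in>I. w i) * (\<Sum>i\<in>I. w i * (y i)^2)"
    by (simp only: sum_product)
  have 4: "(\<Sum>i\<in>I. \<Sum>k\<in>I. w k * (w i * (y i)^2)) = (\<Sum>i\<in>I. w i) * (\<Sum>i\<in>I. w i * (y i)^2)"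
    by (subst sum.swap) (simp only: sum_product)
  have 5: "(\<Sum>i\<in>I. \<Sum>k\<in>I. (w i * y i) * (w k * y k)) = (\<Sum>i\<in>I. w i * y i)^2"
    by (simp only: sum_product power2_eq_square)
  have "0 \<le> (\<Sum>i\<in>I. w i) * (\<Sum>i\<in>I. w i * (y i)^2) + (\<Sum>i\<in>I. w i) * (\<Sum>i\<in>I. w i * (y i)^2) - 2 * (\<Sum>i\<in>I. w i * y i)^2"
    using 0 unfolding 1 2 3 4 5 .
  thus ?thesis by linarith
qed


lemma xi_props:
  fixes gv e :: real
  assumes "-1 \<le> gv" "0 < e" "e \<le> 1/2"
  defines "v \<equiv> xi_trunc e gv"
  shows "\<bar>v\<bar> \<le> 1" "0 \<le> gv * v" "v = 0 \<or> e < \<bar>v\<bar>" "gv \<le> v + e + gv * v"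
    "v^2 \<le> gv * v" "v^2 * (1 + gv) \<le> 2 * (gv * v)"
  using assms unfolding xi_trunc_def by (auto simp: power2_eq_square abs_if mult_le_cancel_right1 algebra_simps split: if_splits)

lemma bucket_cases: "xi_bucket e t v = 0 \<or> xi_bucket e t v = v"
  unfolding xi_bucket_def by auto

lemma bucket_props:
  fixes gv v e :: real and t :: nat
  assumes "\<bar>v\<bar> \<le> 1" "0 \<le> gv * v" "v^2 \<le> gv * v" "v^2 * (1 + gv) \<le> 2 * (gv * v)"
  defines "b \<equiv> xi_bucket e t v"
  shows "\<bar>b\<bar> \<le> 1" "0 \<le> gv * b" "b^2 \<le> gv * b" "b^2 * (1 + gv) \<le> 2 * (gv * b)"
  using bucket_cases[of e t v] assms by auto

lemma ite_split_aux:
  fixes e a b u v :: real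
  assumes "e \<le> a" "a \<le> b"
  shows "(if e < u \<and> u \<le> a then v else 0) + (if a < u \<and> u \<le> b then v else 0)
         = (if e < u \<and> u \<le> b then v else 0)"
  using assms by auto

lemma bucket_sum:
  assumes "0 < e"
  shows "(\<Sum>t<W. xi_bucket e t v) = (if e < \<bar>v\<bar> \<and> \<bar>v\<bar> \<le> e * 2^W then v else 0)"
proof (induction W)
  case 0 then show ?case by auto
next
  case (Suc W)
  have a: "e * 2^W \<le> e * 2^(W+1)" using assms by simp
  have b: "e \<le> e * 2^W" using assms by simp
  have "(\<Sum>t<Suc W. xi_bucket e t v) = (\<Sum>t<W. xi_bucket e t v) + xi_bucket e W v" by simp
  also have "\<dots> = (if e < \<bar>v\<bar> \<and> \<bar>v\<bar> \<le> e * 2^W then v else 0) + (if e * 2^W < \<bar>v\<bar> \<and> \<bar>v\<bar> \<le> e * 2^(W+1) then v else 0)"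
    by (simp only: Suc xi_bucket_def[of e W v])
  also have "\<dots> = (if e < \<bar>v\<bar> \<and> \<bar>v\<bar> \<le> e * 2^(W+1) then v else 0)"
    by (rule ite_split_aux[OF b a])
  finally show ?case by simp
qed

lemma lin_bound:
  fixes g s a :: real
  assumes "0 \<le> g * s" "\<bar>s\<bar> \<le> a" "a \<le> 1"
  shows "g * (exp (- s) - 1) \<le> - ((1 - a) * (g * s))"
proof (cases "s \<ge> 0")
  case True
  have e: "exp (-s) \<le> 1 + (-s) + (-s)^2" using assms by (intro exp_quad) auto
  show ?thesis
  proof (cases "g \<ge> 0")
    case True
    have "g * (exp (-s) - 1) \<le> g * (-s + s^2)" using e True by (intro mult_left_mono) auto
    also have "s^2 \<le> a * s" using \<open>s \<ge> 0\<close> assms(2) by (simp add: power2_eq_square mult_right_mono)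
    hence "g * (-s + s^2) \<le> g * (-s + a * s)" using True by (intro mult_left_mono) auto
    finally show ?thesis by (simp add: algebra_simps)
  next
    case False
    hence "s = 0" using assms(1) True by (smt (verit) mult_neg_pos)
    thus ?thesis by simp
  qed
next
  case False
  have e: "1 + (-s) \<le> exp (-s)" by (rule exp_ge_add_one_self)
  have "g \<le> 0" using assms(1) False by (smt (verit) mult_pos_neg)
  hence "g * (exp (-s) - 1) \<le> g * (-s)" using e by (intro mult_left_mono_neg) auto
  moreover have "0 \<le> a * (g * s)" using assms by (smt (verit) mult_nonneg_nonneg)
  ultimately show ?thesis by (simp add: algebra_simps)
qed

lemma exp_m1_abs:
  fixes s a :: real
  assumes "\<bar>s\<bar> \<le> a" "a \<le> 1"
  shows "\<bar>exp (- s) - 1\<bar> \<le> (1 + a) * \<bar>s\<bar>"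
proof -
  have e1: "exp (-s) \<le> 1 + (-s) + (-s)^2" using assms by (intro exp_quad) auto
  have e2: "1 + (-s) \<le> exp (-s)" by (rule exp_ge_add_one_self)
  have sq: "s^2 = \<bar>s\<bar> * \<bar>s\<bar>" by (simp add: power2_eq_square)
  have "\<bar>s\<bar> * \<bar>s\<bar> \<le> a * \<bar>s\<bar>" using assms(1) by (intro mult_right_mono) auto
  hence s2: "s^2 \<le> a * \<bar>s\<bar>" using sq by simp
  have p: "0 \<le> a * \<bar>s\<bar>" using assms(1) by simp
  have d: "(1 + a) * \<bar>s\<bar> = \<bar>s\<bar> + a * \<bar>s\<bar>" by (simp add: algebra_simps)
  have q1: "-s \<le> \<bar>s\<bar>" "s \<le> \<bar>s\<bar>" by auto
  have e1': "exp (-s) \<le> 1 + (-s) + s^2" using e1 by simp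
  have "exp (-s) - 1 \<le> (1 + a) * \<bar>s\<bar>" using e1' q1 s2 d by linarith
  moreover have "-((1 + a) * \<bar>s\<bar>) \<le> exp (-s) - 1" using e2 q1 p d by linarith
  ultimately show ?thesis by linarith
qed

fun itr :: "(nat \<Rightarrow> 'a \<Rightarrow> 'a) \<Rightarrow> 'a \<Rightarrow> nat list \<Rightarrow> nat \<Rightarrow> 'a" where
  "itr S x ts 0 = x"
| "itr S x ts (Suc k) = S (ts ! k) (itr S x ts k)"

lemma itr_cons: "itr S x (t # ts) (Suc k) = itr S (S t x) ts k"
  by (induction k) auto

definition seqs :: "nat \<Rightarrow> nat \<Rightarrow> nat list set" where "seqs W T = {ts. set ts \<subseteq> {..<W} \<and> length ts = T}"

lemma seqs_fin: "finite (seqs W T)" unfolding seqs_def by (rule finite_lists_length_eq[OF finite_lessThan])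

lemma seqs_card: "card (seqs W T) = W ^ T" unfolding seqs_def using card_lists_length_eq[OF finite_lessThan[of W]] by simp

lemma seqs_0: "seqs W 0 = {[]}" unfolding seqs_def by auto

lemma seqs_Suc: "seqs W (Suc T) = (\<lambda>(t, ts). t # ts) ` ({..<W} \<times> seqs W T)"
  unfolding seqs_def
proof (intro set_eqI iffI)
  fix xs assume "xs \<in> {ts. set ts \<subseteq> {..<W} \<and> length ts = Suc T}"
  then obtain t ts where "xs = t # ts" "t < W" "set ts \<subseteq> {..<W}" "length ts = T"
    by (cases xs) auto
  thus "xs \<in> (\<lambda>(t, ts). t # ts) ` ({..<W} \<times> {ts. set ts \<subseteq> {..<W} \<and> length ts = T})" by force
qed auto

lemma sum_seqs_Suc: "(\<Sum>ts\<in>seqs W (Suc T). G ts) = (\<Sum>t<W. \<Sum>ts\<in>seqs W T. G (t # ts))"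
proof -
  have inj: "inj_on (\<lambda>(t, ts). t # ts) ({..<W} \<times> seqs W T)" by (auto simp: inj_on_def)
  have "(\<Sum>ts\<in>seqs W (Suc T). G ts) = (\<Sum>p\<in>{..<W} \<times> seqs W T. G ((\<lambda>(t, ts). t # ts) p))"
    unfolding seqs_Suc by (rule sum.reindex[OF inj, unfolded comp_def])
  also have "\<dots> = (\<Sum>(t, ts)\<in>{..<W} \<times> seqs W T. G (t # ts))"
    by (rule sum.cong) auto
  also have "\<dots> = (\<Sum>t<W. \<Sum>ts\<in>seqs W T. G (t # ts))"
    by (rule sum.cartesian_product[symmetric])
  finally show ?thesis .
qed

lemma avg_main:
  fixes S :: "nat \<Rightarrow> 'a \<Rightarrow> 'a" and F \<Phi> :: "'a \<Rightarrow> real" and I :: "'a \<Rightarrow> bool"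
  assumes W: "0 < W"
    and pres: "\<And>x t. I x \<Longrightarrow> t < W \<Longrightarrow> I (S t x)"
    and step: "\<And>x. I x \<Longrightarrow> F x \<le> K + (1 / real W) * (\<Sum>t<W. \<Phi> x - \<Phi> (S t x))"
    and lb: "\<And>x. I x \<Longrightarrow> Lb \<le> \<Phi> x"
  shows "I x \<Longrightarrow> (\<Sum>ts\<in>seqs W T. \<Sum>k<T. F (itr S x ts k)) \<le> real W ^ T * (real T * K + \<Phi> x - Lb)"
proof (induction T arbitrary: x)
  case 0
  thus ?case using lb by (simp add: seqs_0)
next
  case (Suc T)
  have IH: "(\<Sum>ts\<in>seqs W T. \<Sum>k<T. F (itr S (S t x) ts k)) \<le> real W ^ T * (real T * K + \<Phi> (S t x) - Lb)"
    if "t < W" for t using Suc.IH pres[OF Suc.prems that] by blast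
  have "(\<Sum>ts\<in>seqs W (Suc T). \<Sum>k<Suc T. F (itr S x ts k))
      = (\<Sum>t<W. \<Sum>ts\<in>seqs W T. \<Sum>k<Suc T. F (itr S x (t # ts) k))" by (rule sum_seqs_Suc)
  also have "\<dots> = (\<Sum>t<W. \<Sum>ts\<in>seqs W T. F x + (\<Sum>k<T. F (itr S (S t x) ts k)))"
    by (simp only: sum.lessThan_Suc_shift itr_cons itr.simps(1))
  also have "\<dots> = (\<Sum>t<W. real W ^ T * F x + (\<Sum>ts\<in>seqs W T. \<Sum>k<T. F (itr S (S t x) ts k)))"
    by (simp add: sum.distrib seqs_card)
  also have "\<dots> \<le> (\<Sum>t<W. real W ^ T * F x + real W ^ T * (real T * K + \<Phi> (S t x) - Lb))"
    using IH by (intro sum_mono add_left_mono) auto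
  also have "\<dots> = real W ^ T * (real W * F x + real W * real T * K + (\<Sum>t<W. \<Phi> (S t x)) - real W * Lb)"
    by (simp add: sum.distrib sum_subtractf sum_distrib_left algebra_simps)
  also have "\<dots> \<le> real W ^ T * (real W * (real (Suc T) * K + \<Phi> x - Lb))"
  proof -
    have "F x \<le> K + (1 / real W) * (\<Sum>t<W. \<Phi> x - \<Phi> (S t x))" by (rule step[OF Suc.prems])
    hence "real W * F x \<le> real W * (K + (1 / real W) * (\<Sum>t<W. \<Phi> x - \<Phi> (S t x)))"
      using W by (intro mult_left_mono) auto
    also have "\<dots> = real W * K + real W * \<Phi> x - (\<Sum>t<W. \<Phi> (S t x))"
      using W by (simp add: sum_subtractf algebra_simps)
    finally have "real W * F x + real W * real T * K + (\<Sum>t<W. \<Phi> (S t x)) - real W * Lb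
        \<le> real W * (real (Suc T) * K + \<Phi> x - Lb)" by (simp add: algebra_simps)
    thus ?thesis by (intro mult_left_mono) auto
  qed
  also have "\<dots> = real W ^ Suc T * (real (Suc T) * K + \<Phi> x - Lb)" by simp
  finally show ?case .
qed

lemma final_arith:
  fixes e a Op :: real
  assumes e: "0 < e" "e \<le> 1/2" and a: "0 < a" "a \<le> 1/80" and Op: "1 \<le> Op"
  shows "((1+e)*(1+9/10*e)*Op + e^3/2)/(1-e/2) + (e/6)/(1-e/2) * (1 + (4*(1+a)/3)*(1+9/10*e)*Op) \<le> (1+5*e)*Op"
proof -
  have h1: "e*e \<le> e/2" using e by (intro order_trans[OF mult_left_mono[of e "1/2" e]]) auto
  have h2: "e*e*e \<le> e/4"
  proof -
    have "e*e*e \<le> (e/2)*e" using h1 e by (intro mult_right_mono) auto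
    also have "\<dots> \<le> (e/2)*(1/2)" using e by (intro mult_left_mono) auto
    finally show ?thesis by simp
  qed
  have poly: "1 + (55/24)*e + (441/400)*(e*e) + (1/2)*(e*e*e) \<le> 1 + (9/2)*e - (5/2)*(e*e)"
    using h1 h2 e by linarith
  define B where "B = (1+e)*(1+9/10*e) + e*e*e/2 + e/6 + (e/6)*(27/20)*(1+9/10*e)"
  have Beq: "B = 1 + (55/24)*e + (441/400)*(e*e) + (1/2)*(e*e*e)" unfolding B_def by (simp add: field_simps)
  have Req: "(1+5*e)*(1-e/2) = 1 + (9/2)*e - (5/2)*(e*e)" by (simp add: algebra_simps)
  have BR: "B \<le> (1+5*e)*(1-e/2)" using poly Beq Req by linarith
  have Op0: "0 \<le> Op" using Op by simp
  have e3: "0 \<le> e*e*e/2" using e by simp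
  have "(e*e*e/2) * 1 \<le> (e*e*e/2) * Op" using Op e3 by (intro mult_left_mono) auto
  hence c1: "e^3/2 \<le> (e*e*e/2) * Op" by (simp add: power3_eq_cube)
  have c2: "(e/6) * 1 \<le> (e/6) * Op" using Op e by (intro mult_left_mono) auto
  have c3: "(4*(1+a)/3)*(1+9/10*e)*Op \<le> (27/20)*(1+9/10*e)*Op"
    using a e Op0 by (intro mult_right_mono) auto
  have X: "(e/6) * (1 + (4*(1+a)/3)*(1+9/10*e)*Op) \<le> (e/6) * (1 + (27/20)*(1+9/10*e)*Op)"
    using c3 e by (intro mult_left_mono) auto
  define W where "W = (e/6) * ((27/20)*(1+9/10*e)*Op)"
  define V where "V = (1+e)*(1+9/10*e)*Op"
  have Y: "(e/6) * (1 + (27/20)*(1+9/10*e)*Op) = e/6 + W" unfolding W_def by (simp add: algebra_simps)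
  have BO: "B * Op = V + (e*e*e/2) * Op + (e/6) * Op + W" unfolding B_def V_def W_def by (simp add: field_simps)
  have N: "(1+e)*(1+9/10*e)*Op + e^3/2 + (e/6) * (1 + (4*(1+a)/3)*(1+9/10*e)*Op) \<le> B * Op"
    using c1 c2 X Y BO unfolding V_def[symmetric] by linarith
  also have "\<dots> \<le> (1+5*e)*(1-e/2) * Op" using BR Op0 by (intro mult_right_mono) auto
  finally have N2: "(1+e)*(1+9/10*e)*Op + e^3/2 + (e/6) * (1 + (4*(1+a)/3)*(1+9/10*e)*Op) \<le> (1+5*e)*Op*(1-e/2)"
    by (simp add: mult_ac)
  have d: "0 < 1 - e/2" using e by simp
  have "((1+e)*(1+9/10*e)*Op + e^3/2)/(1-e/2) + (e/6)/(1-e/2) * (1 + (4*(1+a)/3)*(1+9/10*e)*Op)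
      = ((1+e)*(1+9/10*e)*Op + e^3/2 + (e/6) * (1 + (4*(1+a)/3)*(1+9/10*e)*Op)) / (1-e/2)"
    by (simp add: add_divide_distrib)
  also have "\<dots> \<le> (1+5*e)*Op" using N2 d by (simp add: divide_le_eq)
  finally show ?thesis .
qed

locale pk =
  fixes A :: "nat \<Rightarrow> nat \<Rightarrow> real" and m n :: nat and eps :: real
  assumes m_pos: "0 < m" and n_pos: "0 < n"
    and A_nonneg: "\<forall>j<m. \<forall>i<n. 0 \<le> A j i"
    and col_nz: "\<forall>i<n. \<exists>j<m. A j i \<noteq> 0"
    and min_col: "Min (colnorm A m ` {..<n}) = 1"
    and eps_pos: "0 < eps" and eps_le: "eps \<le> 1/2"
begin

definition "LL = ln (real n * real m / eps)"

lemma nm_ge1: "1 \<le> real n * real m"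
  using m_pos n_pos by (metis One_nat_def less_one not_less of_nat_1 of_nat_le_iff of_nat_mult mult_eq_0_iff linorder_not_le Suc_leI mult_le_mono le_numeral_extra(4) nat_mult_1)

lemma nm_eps_ge2: "2 \<le> real n * real m / eps"
proof -
  have "2 * eps \<le> 1" using eps_le by simp
  also have "\<dots> \<le> real n * real m" by (rule nm_ge1)
  finally show ?thesis using eps_pos by (simp add: le_divide_eq)
qed

lemma LL_ge: "1/2 \<le> LL"
proof -
  have "ln 2 \<le> ln (real n * real m / eps)" using nm_eps_ge2 by (subst ln_le_cancel_iff) auto
  thus ?thesis using ln2_ge unfolding LL_def by linarith
qed

lemma LL_pos: "0 < LL" using LL_ge by linarith

lemma exp_LL: "exp LL = real n * real m / eps"
  unfolding LL_def using nm_eps_ge2 by simp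

lemma mu_eq: "mu n m eps = eps / (4 * LL)" unfolding mu_def LL_def by simp
lemma mu_pos: "0 < mu n m eps" using mu_eq eps_pos LL_pos by simp
lemma mu_LL: "mu n m eps * LL = eps / 4" using mu_eq LL_pos by simp
lemma mu_le: "mu n m eps \<le> eps / 2"
proof -
  have "eps / (4 * LL) \<le> eps / 2" using LL_ge eps_pos by (intro divide_left_mono) auto
  thus ?thesis using mu_eq by simp
qed
lemma mu_le4: "mu n m eps \<le> 1/4" using mu_le eps_le by linarith
lemma alpha_eq: "alpha n m eps = mu n m eps / 20" unfolding alpha_def by simp
lemma alpha_pos: "0 < alpha n m eps" using alpha_eq mu_pos by simp
lemma alpha_le: "alpha n m eps \<le> 1/80" using alpha_eq mu_le4 by simp

lemma col_fin: "finite ((\<lambda>j. \<bar>A j i\<bar>) ` {..<m})" by simp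
lemma col_ne: "(\<lambda>j. \<bar>A j i\<bar>) ` {..<m} \<noteq> {}" using m_pos by auto

lemma A_le_col: "j < m \<Longrightarrow> i < n \<Longrightarrow> A j i \<le> colnorm A m i"
  unfolding colnorm_def by (rule order_trans[OF abs_ge_self], rule Max_ge) auto

lemma A_nn: "j < m \<Longrightarrow> i < n \<Longrightarrow> 0 \<le> A j i" using A_nonneg by auto

lemma col_att: "i < n \<Longrightarrow> \<exists>j<m. A j i = colnorm A m i"
proof -
  assume i: "i < n"
  have "colnorm A m i \<in> (\<lambda>j. \<bar>A j i\<bar>) ` {..<m}" unfolding colnorm_def
    by (rule Max_in[OF col_fin col_ne])
  then obtain j where "j < m" "colnorm A m i = \<bar>A j i\<bar>" by auto
  thus ?thesis using A_nn[of j i] i by auto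
qed

lemma col_ge1: "i < n \<Longrightarrow> 1 \<le> colnorm A m i"
  using min_col Min_le[of "colnorm A m ` {..<n}" "colnorm A m i"] by auto

lemma col1: "\<exists>i0<n. colnorm A m i0 = 1"
proof -
  have "Min (colnorm A m ` {..<n}) \<in> colnorm A m ` {..<n}" using n_pos by (intro Min_in) auto
  thus ?thesis using min_col by auto
qed

lemma col_pos: "i < n \<Longrightarrow> 0 < colnorm A m i" using col_ge1 by fastforce

definition "FS = {(\<Sum>i<n. x i) | x. (\<forall>i<n. 0 \<le> x i) \<and> (\<forall>j<m. matvec A n x j \<le> 1)}"

lemma OPT_def': "packing_OPT A m n = Sup FS" unfolding packing_OPT_def FS_def by simp

lemma matvec_nn: "(\<forall>i<n. 0 \<le> x i) \<Longrightarrow> j < m \<Longrightarrow> 0 \<le> matvec A n x j"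
  unfolding matvec_def using A_nn by (intro sum_nonneg) auto

lemma feas_le1: assumes "\<forall>i<n. 0 \<le> x i" "\<forall>j<m. matvec A n x j \<le> 1" "i < n" shows "x i \<le> 1"
proof -
  obtain j where j: "j < m" "A j i = colnorm A m i" using col_att assms(3) by blast
  have "A j i * x i \<le> matvec A n x j" unfolding matvec_def
    using assms(1,3) A_nn j(1) by (intro member_le_sum[of i "{..<n}" "\<lambda>k. A j k * x k"]) auto
  also have "\<dots> \<le> 1" using assms(2) j by auto
  finally have "A j i * x i \<le> 1" .
  moreover have "x i \<le> A j i * x i" using col_ge1[OF assms(3)] j assms(1,3)
    by (metis mult_le_cancel_right1 not_le)
  ultimately show ?thesis by linarith
qed

lemma FS_le: "s \<in> FS \<Longrightarrow> s \<le> real n"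
proof -
  assume "s \<in> FS"
  then obtain x where x: "s = (\<Sum>i<n. x i)" "\<forall>i<n. 0 \<le> x i" "\<forall>j<m. matvec A n x j \<le> 1"
    unfolding FS_def by blast
  have "(\<Sum>i<n. x i) \<le> (\<Sum>i<n. 1)" using feas_le1[OF x(2,3)] by (intro sum_mono) auto
  thus ?thesis using x by simp
qed

lemma FS_bdd: "bdd_above FS" using FS_le by (intro bdd_aboveI) auto

lemma OPT_ge: "(\<forall>i<n. 0 \<le> x i) \<Longrightarrow> (\<forall>j<m. matvec A n x j \<le> 1) \<Longrightarrow> (\<Sum>i<n. x i) \<le> packing_OPT A m n"
  unfolding OPT_def' by (rule cSup_upper[OF _ FS_bdd]) (auto simp: FS_def)

lemma FS_ne: "FS \<noteq> {}"
proof -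
  have "(\<Sum>i<n. (0::real)) \<in> FS" unfolding FS_def by (force simp: matvec_def)
  thus ?thesis by blast
qed

lemma OPT_le_n: "packing_OPT A m n \<le> real n"
  unfolding OPT_def' by (rule cSup_least[OF FS_ne]) (rule FS_le)

lemma OPT_ge1: "1 \<le> packing_OPT A m n"
proof -
  obtain i0 where i0: "i0 < n" "colnorm A m i0 = 1" using col1 by blast
  define x where "x = (\<lambda>i. if i = i0 then (1::real) else 0)"
  have mv: "matvec A n x j = A j i0" for j unfolding matvec_def x_def using i0(1)
    by (simp add: if_distrib[of "\<lambda>v. A j _ * v"] sum.delta cong: if_cong)
  have "(\<Sum>i<n. x i) \<le> packing_OPT A m n"
  proof (rule OPT_ge)
    show "\<forall>j<m. matvec A n x j \<le> 1" using mv i0 A_le_col[of _ i0] by auto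
  qed (auto simp: x_def)
  moreover have "(\<Sum>i<n. x i) = 1" unfolding x_def using i0(1) by simp
  ultimately show ?thesis by simp
qed

lemma OPT_scale: assumes "\<forall>i<n. 0 \<le> x i" "0 < lam" "\<forall>j<m. matvec A n x j \<le> lam"
  shows "(\<Sum>i<n. x i) \<le> lam * packing_OPT A m n"
proof -
  have mv: "matvec A n (\<lambda>i. x i / lam) j = matvec A n x j / lam" for j
    unfolding matvec_def by (simp add: sum_divide_distrib)
  have "(\<Sum>i<n. x i / lam) \<le> packing_OPT A m n"
    by (rule OPT_ge) (use assms in \<open>auto simp: mv\<close>)
  thus ?thesis using assms(2) by (simp add: sum_divide_distrib[symmetric] divide_le_eq mult.commute)
qed


abbreviation "\<mu> \<equiv> mu n m eps"
abbreviation "\<alpha> \<equiv> alpha n m eps"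
abbreviation "OPT \<equiv> packing_OPT A m n"
abbreviation "ww \<equiv> wpar eps"
abbreviation "pp x j \<equiv> pvec A m n eps x j"
abbreviation "gg x i \<equiv> grad_f A m n eps x i"
abbreviation "x0 \<equiv> x_init A m n eps"

definition "fF x = -(\<Sum>i<n. x i) + \<mu> * (\<Sum>j<m. pp x j)"

lemma pp_pos: "0 < pp x j" unfolding pvec_def by simp

lemma gg_eq: "1 + gg x i = (\<Sum>j<m. A j i * pp x j)" unfolding grad_f_def by simp

lemma gg_ge: "i < n \<Longrightarrow> -1 \<le> gg x i"
proof -
  assume i: "i < n"
  have "0 \<le> (\<Sum>j<m. A j i * pp x j)" using A_nn i pp_pos by (intro sum_nonneg) (simp add: less_imp_le)
  thus ?thesis using gg_eq[of x i] by linarith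
qed

lemma x0_eq: "x0 i = (1 - eps/2) / (real n * colnorm A m i)" unfolding x_init_def by simp

lemma x0_pos: "i < n \<Longrightarrow> 0 < x0 i"
  unfolding x0_eq using col_pos n_pos eps_le by (intro divide_pos_pos mult_pos_pos) auto

lemma x0_le: "i < n \<Longrightarrow> x0 i \<le> (1 - eps/2) / real n"
  unfolding x0_eq using col_ge1 n_pos eps_le
  by (intro divide_left_mono) (auto intro: mult_pos_pos order.strict_trans2[OF _ col_ge1] simp: col_pos)

lemma x0_mv: "j < m \<Longrightarrow> matvec A n x0 j \<le> 1 - eps/2"
proof -
  assume j: "j < m"
  have "matvec A n x0 j \<le> (\<Sum>i<n. (1 - eps/2) / real n)" unfolding matvec_def
  proof (rule sum_mono)
    fix i assume "i \<in> {..<n}"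
    hence i: "i < n" by simp
    have c: "0 < colnorm A m i" using col_pos i by simp
    have "A j i * x0 i = (A j i / colnorm A m i) * ((1 - eps/2) / real n)"
      unfolding x0_eq using c n_pos by (simp add: field_simps)
    also have "\<dots> \<le> 1 * ((1 - eps/2) / real n)"
      using A_le_col[OF j i] c eps_le n_pos by (intro mult_right_mono) (auto simp: divide_le_eq)
    finally show "A j i * x0 i \<le> (1 - eps/2) / real n" by simp
  qed
  also have "\<dots> = 1 - eps/2" using n_pos by simp
  finally show ?thesis .
qed

lemma x0_sum_le: "(\<Sum>i<n. x0 i) \<le> 1"
proof -
  have "(\<Sum>i<n. x0 i) \<le> (\<Sum>i<n. (1 - eps/2) / real n)" using x0_le by (intro sum_mono) auto
  also have "\<dots> = 1 - eps/2" using n_pos by simp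
  finally show ?thesis using eps_pos by linarith
qed

lemma x0_sum_ge: "(1 - eps/2) / real n \<le> (\<Sum>i<n. x0 i)"
proof -
  obtain i0 where i0: "i0 < n" "colnorm A m i0 = 1" using col1 by blast
  have "x0 i0 \<le> (\<Sum>i<n. x0 i)" using i0 x0_pos by (intro member_le_sum) (auto simp: less_imp_le)
  moreover have "x0 i0 = (1 - eps/2) / real n" using i0 unfolding x0_eq by simp
  ultimately show ?thesis by simp
qed

lemma exp_m2LL: "exp (-2 * LL) = (eps / (real n * real m))^2"
proof -
  have "exp (-2 * LL) = inverse (exp LL ^ 2)"
    by (simp add: exp_minus exp_of_nat_mult[symmetric])
  also have "\<dots> = (eps / (real n * real m))^2" unfolding exp_LL by (simp add: power_inverse[symmetric])
  finally show ?thesis .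
qed

lemma pp_bound: "matvec A n x j - 1 \<le> - s \<Longrightarrow> pp x j \<le> exp (- s / \<mu>)"
  unfolding pvec_def using mu_pos by (simp add: divide_le_eq)

lemma eps_mu: "eps / \<mu> = 4 * LL" using mu_eq eps_pos LL_pos by simp

lemma pp_x0: "j < m \<Longrightarrow> pp x0 j \<le> exp (-2 * LL)"
proof -
  assume j: "j < m"
  have "pp x0 j \<le> exp (- (eps/2) / \<mu>)" by (rule pp_bound) (use x0_mv[OF j] in simp)
  also have "- (eps/2) / \<mu> = -2 * LL" using eps_mu by (simp add: field_simps)
  finally show ?thesis .
qed

lemma f_x0: "fF x0 \<le> 0"
proof -
  have "(\<Sum>j<m. pp x0 j) \<le> (\<Sum>j<m. exp (-2 * LL))" using pp_x0 by (intro sum_mono) auto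
  also have "\<dots> = real m * (eps / (real n * real m))^2" by (subst exp_m2LL) simp
  also have "\<dots> = eps^2 / (real n * real n * real m)" using m_pos by (simp add: power2_eq_square field_simps)
  also have "\<dots> \<le> 1 / real n"
  proof -
    have "eps^2 \<le> 1" using eps_pos eps_le by (simp add: power_le_one)
    also have "1 \<le> real n * real m" by (rule nm_ge1)
    finally show ?thesis using n_pos m_pos by (simp add: field_simps)
  qed
  finally have s: "(\<Sum>j<m. pp x0 j) \<le> 1 / real n" .
  have "\<mu> * (\<Sum>j<m. pp x0 j) \<le> (1/4) * (1 / real n)"
    using s mu_le4 mu_pos by (intro mult_mono) (auto intro: sum_nonneg less_imp_le pp_pos)
  also have "\<dots> \<le> (1 - eps/2) / real n" using eps_le n_pos by (simp add: field_simps)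
  finally show ?thesis unfolding fF_def using x0_sum_ge by linarith
qed

lemma w_props: "1 \<le> ww" "1 \<le> eps * 2 ^ ww"
proof -
  have le: "1 \<le> log 2 (1/eps)"
  proof -
    have "2 \<le> 1/eps" using eps_pos eps_le by (simp add: field_simps)
    hence "log 2 2 \<le> log 2 (1/eps)" using eps_pos by (subst log_le_cancel_iff) auto
    thus ?thesis by simp
  qed
  have c0: "0 \<le> \<lceil>log 2 (1/eps)\<rceil>" using le by linarith
  have "real ww = of_int \<lceil>log 2 (1/eps)\<rceil>" unfolding wpar_def using c0 by (rule of_nat_nat)
  hence c: "log 2 (1/eps) \<le> real ww" by (simp add: le_of_int_ceiling)
  show "1 \<le> ww" using c le by linarith
  have "1/eps = 2 powr (log 2 (1/eps))" using eps_pos by simp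
  also have "\<dots> \<le> 2 powr (real ww)" using c by (intro powr_mono) auto
  also have "\<dots> = 2 ^ ww" by (simp add: powr_realpow)
  finally show "1 \<le> eps * 2 ^ ww" using eps_pos by (simp add: field_simps)
qed


lemma swap_sum: "(\<Sum>j<m. a j * (\<Sum>i<n. A j i * b i)) = (\<Sum>i<n. b i * (\<Sum>j<m. A j i * a j))"
proof -
  have "(\<Sum>j<m. a j * (\<Sum>i<n. A j i * b i)) = (\<Sum>j<m. \<Sum>i<n. a j * A j i * b i)"
    by (simp add: sum_distrib_left mult.assoc)
  also have "\<dots> = (\<Sum>i<n. \<Sum>j<m. a j * A j i * b i)" by (rule sum.swap)
  also have "\<dots> = (\<Sum>i<n. b i * (\<Sum>j<m. A j i * a j))"
    by (simp add: sum_distrib_left mult.commute mult.left_commute)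
  finally show ?thesis .
qed

lemma descent:
  fixes x v :: "nat \<Rightarrow> real"
  assumes xpos: "\<forall>i<n. 0 < x i"
    and mvb: "\<forall>j<m. matvec A n x j \<le> 3/2"
    and vb: "\<forall>i<n. \<bar>v i\<bar> \<le> 1"
    and gv: "\<forall>i<n. 0 \<le> gg x i * v i"
    and v2: "\<forall>i<n. (v i)^2 * (1 + gg x i) \<le> 2 * (gg x i * v i)"
  shows "fF (\<lambda>i. x i * exp (- \<alpha> * v i)) \<le> fF x - (3/4) * \<alpha> * (\<Sum>i<n. gg x i * v i * x i)"
proof -
  define x' where "x' = (\<lambda>i. x i * exp (- \<alpha> * v i))"
  define d where "d i = x' i - x i" for i
  define Q where "Q = (\<Sum>i<n. gg x i * v i * x i)"
  define k where "k = 1 + \<alpha>"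
  define \<Delta> where "\<Delta> j = (\<Sum>i<n. A j i * d i)" for j
  define T where "T j = (\<Sum>i<n. A j i * x i * (v i)^2)" for j
  define Sv where "Sv j = (\<Sum>i<n. A j i * x i * \<bar>v i\<bar>)" for j
  have al: "0 < \<alpha>" "\<alpha> \<le> 1/80" using alpha_pos alpha_le by auto
  have xp: "\<And>i. i < n \<Longrightarrow> 0 < x i" using xpos by auto
  have mu: "0 < \<mu>" "\<alpha> = \<mu> / 20" using mu_pos alpha_eq by auto
  have sabs: "\<bar>\<alpha> * v i\<bar> \<le> \<alpha>" if "i < n" for i
    using vb that al by (simp add: abs_mult mult_le_cancel_left1)
  have dform: "d i = x i * (exp (- (\<alpha> * v i)) - 1)" for i
    unfolding d_def x'_def by (simp add: algebra_simps)
  have dabs: "\<bar>d i\<bar> \<le> k * \<alpha> * (x i * \<bar>v i\<bar>)" if i: "i < n" for i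
  proof -
    have "\<bar>exp (- (\<alpha> * v i)) - 1\<bar> \<le> (1 + \<alpha>) * \<bar>\<alpha> * v i\<bar>"
      by (rule exp_m1_abs[OF sabs[OF i]]) (use al in simp)
    hence "x i * \<bar>exp (- (\<alpha> * v i)) - 1\<bar> \<le> x i * ((1 + \<alpha>) * \<bar>\<alpha> * v i\<bar>)"
      using xpos i by (intro mult_left_mono) auto
    moreover have "\<bar>d i\<bar> = x i * \<bar>exp (- (\<alpha> * v i)) - 1\<bar>"
      unfolding dform using xpos i by (simp add: abs_mult abs_of_pos)
    moreover have "x i * ((1 + \<alpha>) * \<bar>\<alpha> * v i\<bar>) = k * \<alpha> * (x i * \<bar>v i\<bar>)"
      unfolding k_def using al by (simp add: abs_mult mult_ac)
    ultimately show ?thesis by simp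
  qed
  have lin: "gg x i * d i \<le> - ((1 - \<alpha>) * (\<alpha> * (gg x i * v i * x i)))" if i: "i < n" for i
  proof -
    have gs: "0 \<le> gg x i * (\<alpha> * v i)" using gv i al by (simp add: mult.left_commute)
    have "gg x i * (exp (- (\<alpha> * v i)) - 1) \<le> - ((1 - \<alpha>) * (gg x i * (\<alpha> * v i)))"
      by (rule lin_bound[OF gs sabs[OF i]]) (use al in simp)
    hence "x i * (gg x i * (exp (- (\<alpha> * v i)) - 1)) \<le> x i * (- ((1 - \<alpha>) * (gg x i * (\<alpha> * v i))))"
      using xpos i by (intro mult_left_mono) auto
    thus ?thesis unfolding dform by (simp add: mult_ac)
  qed
  have x'd: "x' i = x i + d i" for i unfolding d_def by simp
  have mv': "matvec A n x' j = matvec A n x j + \<Delta> j" for j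
    unfolding matvec_def \<Delta>_def x'd by (simp add: distrib_left sum.distrib)
  have Sle: "Sv j \<le> matvec A n x j" if j: "j < m" for j
    unfolding Sv_def matvec_def
  proof (rule sum_mono)
    fix i assume "i \<in> {..<n}"
    hence i: "i < n" by simp
    have "0 \<le> A j i * x i" using A_nn[OF j i] xp[OF i] by (intro mult_nonneg_nonneg) auto
    thus "A j i * x i * \<bar>v i\<bar> \<le> A j i * x i" using vb i by (intro mult_left_le) auto
  qed
  have Sv_nn: "0 \<le> Sv j" if j: "j < m" for j
    unfolding Sv_def using A_nn[OF j] xp by (intro sum_nonneg mult_nonneg_nonneg) (auto simp: less_imp_le)
  have T_nn: "0 \<le> T j" if j: "j < m" for j
    unfolding T_def using A_nn[OF j] xp by (intro sum_nonneg mult_nonneg_nonneg) (auto simp: less_imp_le)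
  have Dabs: "\<bar>\<Delta> j\<bar> \<le> k * \<alpha> * Sv j" if j: "j < m" for j
  proof -
    have "\<bar>\<Delta> j\<bar> \<le> (\<Sum>i<n. \<bar>A j i * d i\<bar>)" unfolding \<Delta>_def by (rule sum_abs)
    also have "\<dots> \<le> (\<Sum>i<n. A j i * (k * \<alpha> * (x i * \<bar>v i\<bar>)))"
    proof (rule sum_mono)
      fix i assume "i \<in> {..<n}"
      hence i: "i < n" by simp
      show "\<bar>A j i * d i\<bar> \<le> A j i * (k * \<alpha> * (x i * \<bar>v i\<bar>))"
        using A_nn[OF j i] dabs[OF i] by (simp add: abs_mult mult_left_mono)
    qed
    also have "\<dots> = k * \<alpha> * Sv j" unfolding Sv_def by (simp add: sum_distrib_left mult_ac)
    finally show ?thesis .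
  qed
  have CS: "(Sv j)^2 \<le> matvec A n x j * T j" if j: "j < m" for j
  proof -
    have "(\<Sum>i<n. (A j i * x i) * \<bar>v i\<bar>)^2 \<le> (\<Sum>i<n. A j i * x i) * (\<Sum>i<n. (A j i * x i) * \<bar>v i\<bar>^2)"
      by (rule wcs) (use A_nn[OF j] xp in \<open>auto intro: mult_nonneg_nonneg less_imp_le\<close>)
    thus ?thesis unfolding Sv_def T_def matvec_def by simp
  qed
  have k: "1 \<le> k" "k \<le> 81/80" unfolding k_def using al by auto
  have D2: "(\<Delta> j)^2 \<le> (k * \<alpha>)^2 * (3/2) * T j" if j: "j < m" for j
  proof -
    have "(\<Delta> j)^2 = \<bar>\<Delta> j\<bar>^2" by simp
    also have "\<dots> \<le> (k * \<alpha> * Sv j)^2" using Dabs[OF j] by (intro power_mono) auto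
    also have "\<dots> = (k * \<alpha>)^2 * (Sv j)^2" by (simp add: power_mult_distrib)
    also have "\<dots> \<le> (k * \<alpha>)^2 * (matvec A n x j * T j)" using CS[OF j] by (intro mult_left_mono) auto
    also have "\<dots> \<le> (k * \<alpha>)^2 * ((3/2) * T j)"
      using mvb j T_nn[OF j] by (intro mult_left_mono mult_right_mono) auto
    finally show ?thesis by (simp add: mult_ac)
  qed
  have zb: "\<bar>\<Delta> j / \<mu>\<bar> \<le> 1" if j: "j < m" for j
  proof -
    have "\<bar>\<Delta> j\<bar> \<le> k * \<alpha> * (3/2)"
      using Dabs[OF j] Sle[OF j] mvb j k al
      by (meson order_trans mult_left_mono less_imp_le mult_nonneg_nonneg zero_le_one)
    also have "\<dots> \<le> (81/80) * (\<mu> / 20) * (3/2)" using k al mu by (intro mult_right_mono mult_mono) auto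
    also have "\<dots> \<le> \<mu>" using mu by simp
    finally show ?thesis using mu by (simp add: abs_divide divide_le_eq)
  qed
  have pp': "pp x' j = pp x j * exp (\<Delta> j / \<mu>)" for j
    unfolding pvec_def mv' using mu(1) by (simp add: exp_add[symmetric] field_simps)
  have rowb: "\<mu> * pp x' j \<le> \<mu> * pp x j + pp x j * \<Delta> j + pp x j * ((\<Delta> j)^2 / \<mu>)" if j: "j < m" for j
  proof -
    have "exp (\<Delta> j / \<mu>) \<le> 1 + \<Delta> j / \<mu> + (\<Delta> j / \<mu>)^2" by (rule exp_quad[OF zb[OF j]])
    hence "\<mu> * pp x j * exp (\<Delta> j / \<mu>) \<le> \<mu> * pp x j * (1 + \<Delta> j / \<mu> + (\<Delta> j / \<mu>)^2)"
      using mu pp_pos[of x j] by (intro mult_left_mono) auto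
    moreover have "\<mu> * pp x j * (1 + \<Delta> j / \<mu> + (\<Delta> j / \<mu>)^2) = \<mu> * pp x j + pp x j * \<Delta> j + pp x j * ((\<Delta> j)^2 / \<mu>)"
      using mu(1) by (simp add: field_simps power2_eq_square)
    ultimately show ?thesis unfolding pp' by (simp add: mult.assoc)
  qed
  have sum1: "(\<Sum>j<m. pp x j * \<Delta> j) = (\<Sum>i<n. d i * (1 + gg x i))"
    unfolding \<Delta>_def gg_eq by (rule swap_sum)
  have R: "(\<Sum>j<m. pp x j * ((\<Delta> j)^2 / \<mu>)) \<le> (3/20) * k^2 * \<alpha> * Q"
  proof -
    have "(\<Sum>j<m. pp x j * ((\<Delta> j)^2 / \<mu>)) \<le> (\<Sum>j<m. pp x j * ((k * \<alpha>)^2 * (3/2) * T j / \<mu>))"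
      using D2 mu(1) pp_pos by (intro sum_mono mult_left_mono divide_right_mono) (auto simp: less_imp_le)
    also have "\<dots> = (\<Sum>j<m. ((k * \<alpha>)^2 * (3/2) / \<mu>) * (pp x j * T j))"
      by (intro sum.cong refl) (simp add: mult_ac)
    also have "\<dots> = ((k * \<alpha>)^2 * (3/2) / \<mu>) * (\<Sum>j<m. pp x j * T j)"
      by (rule sum_distrib_left[symmetric])
    finally have F1: "(\<Sum>j<m. pp x j * ((\<Delta> j)^2 / \<mu>)) \<le> ((k * \<alpha>)^2 * (3/2) / \<mu>) * (\<Sum>j<m. pp x j * T j)" .
    have "(\<Sum>j<m. pp x j * T j) = (\<Sum>i<n. (x i * (v i)^2) * (1 + gg x i))"
      unfolding T_def gg_eq by (subst swap_sum[symmetric]) (simp add: mult_ac)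
    also have "\<dots> \<le> (\<Sum>i<n. x i * (2 * (gg x i * v i)))"
    proof (rule sum_mono)
      fix i assume "i \<in> {..<n}"
      hence i: "i < n" by simp
      have "x i * ((v i)^2 * (1 + gg x i)) \<le> x i * (2 * (gg x i * v i))"
        using v2 xpos i by (intro mult_left_mono) auto
      thus "(x i * (v i)^2) * (1 + gg x i) \<le> x i * (2 * (gg x i * v i))" by (simp add: mult_ac)
    qed
    also have "\<dots> = 2 * Q" unfolding Q_def by (simp add: sum_distrib_left mult_ac)
    finally have "(\<Sum>j<m. pp x j * T j) \<le> 2 * Q" .
    hence "((k * \<alpha>)^2 * (3/2) / \<mu>) * (\<Sum>j<m. pp x j * T j) \<le> ((k * \<alpha>)^2 * (3/2) / \<mu>) * (2 * Q)"
      using mu(1) by (intro mult_left_mono) auto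
    with F1 have "(\<Sum>j<m. pp x j * ((\<Delta> j)^2 / \<mu>)) \<le> ((k * \<alpha>)^2 * (3/2) / \<mu>) * (2 * Q)" by linarith
    also have "((k * \<alpha>)^2 * (3/2) / \<mu>) * (2 * Q) = (3/20) * k^2 * \<alpha> * Q"
      using mu by (simp add: power2_eq_square field_simps)
    finally show ?thesis .
  qed
  have L: "(\<Sum>i<n. gg x i * d i) \<le> - ((1 - \<alpha>) * \<alpha> * Q)"
  proof -
    have "(\<Sum>i<n. gg x i * d i) \<le> (\<Sum>i<n. - ((1 - \<alpha>) * (\<alpha> * (gg x i * v i * x i))))"
      using lin by (intro sum_mono) auto
    also have "\<dots> = - ((1 - \<alpha>) * \<alpha> * Q)" unfolding Q_def by (simp add: sum_negf sum_distrib_left mult_ac)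
    finally show ?thesis .
  qed
  have Qnn: "0 \<le> Q" unfolding Q_def
  proof (rule sum_nonneg)
    fix i assume "i \<in> {..<n}"
    thus "0 \<le> gg x i * v i * x i" using gv xp[of i] by (intro mult_nonneg_nonneg[of "gg x i * v i"]) auto
  qed
  have "fF x' = -(\<Sum>i<n. x' i) + (\<Sum>j<m. \<mu> * pp x' j)" unfolding fF_def by (simp add: sum_distrib_left)
  also have "\<dots> \<le> -(\<Sum>i<n. x' i) + (\<Sum>j<m. \<mu> * pp x j + pp x j * \<Delta> j + pp x j * ((\<Delta> j)^2 / \<mu>))"
    using rowb by (intro add_left_mono sum_mono) auto
  also have "\<dots> = -(\<Sum>i<n. x i) - (\<Sum>i<n. d i) + \<mu> * (\<Sum>j<m. pp x j) + (\<Sum>i<n. d i * (1 + gg x i))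
      + (\<Sum>j<m. pp x j * ((\<Delta> j)^2 / \<mu>))"
    unfolding x'd sum.distrib sum1[symmetric] by (simp add: sum_distrib_left)
  also have "(\<Sum>i<n. d i * (1 + gg x i)) = (\<Sum>i<n. d i) + (\<Sum>i<n. gg x i * d i)"
    by (simp add: distrib_left sum.distrib mult.commute)
  finally have "fF x' \<le> fF x + (\<Sum>i<n. gg x i * d i) + (\<Sum>j<m. pp x j * ((\<Delta> j)^2 / \<mu>))"
    unfolding fF_def by linarith
  also have "\<dots> \<le> fF x - ((1 - \<alpha>) * \<alpha> * Q) + (3/20) * k^2 * \<alpha> * Q" using L R by linarith
  also have "\<dots> \<le> fF x - (3/4) * \<alpha> * Q"
  proof -
    have "k^2 \<le> (81/80)^2" using k by (intro power_mono) auto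
    hence "(3/20) * k^2 \<le> (3/20) * (81/80)^2" by simp
    hence "(3/4) + (3/20) * k^2 \<le> 1 - \<alpha>" using al by (simp add: power2_eq_square)
    hence "((3/4) + (3/20) * k^2) * (\<alpha> * Q) \<le> (1 - \<alpha>) * (\<alpha> * Q)"
      using al Qnn by (intro mult_right_mono) auto
    thus ?thesis by (simp add: algebra_simps)
  qed
  finally show ?thesis unfolding x'_def Q_def .
qed


lemma mirror:
  fixes x v :: "nat \<Rightarrow> real"
  assumes xpos: "\<forall>i<n. 0 < x i" and vb: "\<forall>i<n. \<bar>v i\<bar> \<le> 1"
  shows "(\<Sum>i<n. x i * exp (- \<alpha> * v i)) \<le> (\<Sum>i<n. x i) - \<alpha> * (\<Sum>i<n. v i * x i) + \<alpha>^2 * (\<Sum>i<n. (v i)^2 * x i)"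
proof -
  have al: "0 < \<alpha>" "\<alpha> \<le> 1/80" using alpha_pos alpha_le by auto
  have "(\<Sum>i<n. x i * exp (- \<alpha> * v i)) \<le> (\<Sum>i<n. x i - \<alpha> * (v i * x i) + \<alpha>^2 * ((v i)^2 * x i))"
  proof (rule sum_mono)
    fix i assume "i \<in> {..<n}"
    hence i: "i < n" by simp
    have vi: "\<bar>v i\<bar> \<le> 1" using vb i by auto
    have "\<bar>\<alpha> * v i\<bar> = \<alpha> * \<bar>v i\<bar>" using al by (simp add: abs_mult)
    also have "\<dots> \<le> \<alpha> * 1" using vi al by (intro mult_left_mono) auto
    finally have "\<bar>\<alpha> * v i\<bar> \<le> \<alpha> * 1" .
    hence a: "\<bar>- (\<alpha> * v i)\<bar> \<le> 1" using al by simp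
    have "exp (- (\<alpha> * v i)) \<le> 1 + (- (\<alpha> * v i)) + (- (\<alpha> * v i))^2" by (rule exp_quad[OF a])
    hence "x i * exp (- (\<alpha> * v i)) \<le> x i * (1 + (- (\<alpha> * v i)) + (- (\<alpha> * v i))^2)"
      using xpos i by (intro mult_left_mono) auto
    thus "x i * exp (- \<alpha> * v i) \<le> x i - \<alpha> * (v i * x i) + \<alpha>^2 * ((v i)^2 * x i)"
      by (simp add: algebra_simps power2_eq_square)
  qed
  also have "\<dots> = (\<Sum>i<n. x i) - \<alpha> * (\<Sum>i<n. v i * x i) + \<alpha>^2 * (\<Sum>i<n. (v i)^2 * x i)"
    by (simp add: sum.distrib sum_subtractf sum_distrib_left)
  finally show ?thesis .
qed

definition "vbk t x i = xi_bucket eps t (xi_trunc eps (gg x i))"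

lemma step_eq: "alg_step A m n eps t x = (\<lambda>i. x i * exp (- \<alpha> * vbk t x i))"
  by (rule ext) (simp add: alg_step_def vbk_def)

lemma xi_p: assumes "i < n" shows
  "\<bar>xi_trunc eps (gg x i)\<bar> \<le> 1" "0 \<le> gg x i * xi_trunc eps (gg x i)"
  "xi_trunc eps (gg x i) = 0 \<or> eps < \<bar>xi_trunc eps (gg x i)\<bar>"
  "gg x i \<le> xi_trunc eps (gg x i) + eps + gg x i * xi_trunc eps (gg x i)"
  "(xi_trunc eps (gg x i))^2 \<le> gg x i * xi_trunc eps (gg x i)"
  "(xi_trunc eps (gg x i))^2 * (1 + gg x i) \<le> 2 * (gg x i * xi_trunc eps (gg x i))"
  using xi_props[OF gg_ge[OF assms] eps_pos eps_le] by auto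

lemma vbk_p: assumes "i < n" shows
  "\<bar>vbk t x i\<bar> \<le> 1" "0 \<le> gg x i * vbk t x i" "(vbk t x i)^2 \<le> gg x i * vbk t x i"
  "(vbk t x i)^2 * (1 + gg x i) \<le> 2 * (gg x i * vbk t x i)"
  unfolding vbk_def using bucket_props[OF xi_p(1,2,5,6)[OF assms]] by auto

lemma vbk_sum: assumes "i < n" shows "(\<Sum>t<ww. vbk t x i) = xi_trunc eps (gg x i)"
proof -
  have "(\<Sum>t<ww. vbk t x i) = (if eps < \<bar>xi_trunc eps (gg x i)\<bar> \<and> \<bar>xi_trunc eps (gg x i)\<bar> \<le> eps * 2^ww
      then xi_trunc eps (gg x i) else 0)" unfolding vbk_def by (rule bucket_sum[OF eps_pos])
  moreover have "\<bar>xi_trunc eps (gg x i)\<bar> \<le> eps * 2^ww" using xi_p(1)[OF assms, of x] w_props(2) by linarith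
  ultimately show ?thesis using xi_p(3)[OF assms, of x] by auto
qed

definition "Inv x \<longleftrightarrow> (\<forall>i<n. 0 < x i) \<and> fF x \<le> 0 \<and> (\<forall>j<m. matvec A n x j \<le> 1 + 9/10 * eps)"

lemma inv_x0: "Inv x0"
proof -
  have "matvec A n x0 j \<le> 1 + 9/10 * eps" if "j < m" for j using x0_mv[OF that] eps_pos by linarith
  thus ?thesis unfolding Inv_def using x0_pos f_x0 by auto
qed

lemma fF_lb: "(\<forall>i<n. 0 \<le> x i) \<Longrightarrow> - (\<Sum>i<n. x i) \<le> fF x"
  unfolding fF_def using mu_pos pp_pos by (simp add: sum_nonneg less_imp_le)

lemma Q_nn: "\<forall>i<n. 0 < x i \<Longrightarrow> 0 \<le> (\<Sum>i<n. gg x i * vbk t x i * x i)"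
  using vbk_p(2) by (intro sum_nonneg) (simp add: less_imp_le)

lemma inv_step: assumes I: "Inv x" shows "Inv (alg_step A m n eps t x)"
proof -
  define x' where "x' = alg_step A m n eps t x"
  have x'e: "x' = (\<lambda>i. x i * exp (- \<alpha> * vbk t x i))" unfolding x'_def step_eq ..
  have xpos: "\<forall>i<n. 0 < x i" and fx: "fF x \<le> 0" and mvx: "\<forall>j<m. matvec A n x j \<le> 1 + 9/10 * eps"
    using I unfolding Inv_def by auto
  have al: "0 < \<alpha>" "\<alpha> \<le> 1/80" using alpha_pos alpha_le by auto
  have x'pos: "\<forall>i<n. 0 < x' i" using xpos unfolding x'e by simp
  have mvb: "\<forall>j<m. matvec A n x j \<le> 3/2" using mvx eps_le by (auto intro: order_trans)
  have desc: "fF x' \<le> fF x - (3/4) * \<alpha> * (\<Sum>i<n. gg x i * vbk t x i * x i)"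
    unfolding x'e by (rule descent[OF xpos mvb]) (use vbk_p in auto)
  have "0 \<le> (3/4) * \<alpha> * (\<Sum>i<n. gg x i * vbk t x i * x i)"
    using Q_nn[OF xpos, of t] al by (intro mult_nonneg_nonneg) auto
  hence fx': "fF x' \<le> 0" using desc fx by linarith
  define lam where "lam = exp \<alpha> * (1 + 9/10 * eps)"
  have x'le: "x' i \<le> exp \<alpha> * x i" if "i < n" for i
  proof -
    have "\<bar>\<alpha> * vbk t x i\<bar> = \<alpha> * \<bar>vbk t x i\<bar>" using al by (simp add: abs_mult)
    also have "\<dots> \<le> \<alpha> * 1" using vbk_p(1)[OF that, of t x] al by (intro mult_left_mono) auto
    finally have "\<bar>\<alpha> * vbk t x i\<bar> \<le> \<alpha>" by simp
    moreover have "- \<alpha> * vbk t x i = - (\<alpha> * vbk t x i)" by simp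
    ultimately have "- \<alpha> * vbk t x i \<le> \<alpha>" by linarith
    hence "exp (- \<alpha> * vbk t x i) \<le> exp \<alpha>" by simp
    thus ?thesis unfolding x'e using xpos that by (simp add: mult.commute mult_left_mono less_imp_le)
  qed
  have mv': "matvec A n x' j \<le> lam" if j: "j < m" for j
  proof -
    have "matvec A n x' j \<le> (\<Sum>i<n. A j i * (exp \<alpha> * x i))" unfolding matvec_def
      using x'le A_nn[OF j] by (intro sum_mono mult_left_mono) auto
    also have "\<dots> = exp \<alpha> * matvec A n x j" unfolding matvec_def by (simp add: sum_distrib_left mult_ac)
    also have "\<dots> \<le> lam" unfolding lam_def using mvx j by simp
    finally show ?thesis .
  qed
  have lam_pos: "0 < lam" unfolding lam_def using eps_pos by simp
  have lam_le: "lam \<le> (6481/6400) * (29/20)"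
  proof -
    have "exp \<alpha> \<le> 1 + \<alpha> + \<alpha>^2" using al by (intro exp_quad) auto
    also have "\<dots> \<le> 6481/6400"
    proof -
      have "\<alpha>^2 \<le> \<alpha> * (1/80)" unfolding power2_eq_square using al by (intro mult_left_mono) auto
      thus ?thesis using al by linarith
    qed
    finally have "exp \<alpha> \<le> 6481/6400" .
    moreover have "1 + 9/10 * eps \<le> 29/20" using eps_le by simp
    ultimately show ?thesis unfolding lam_def by (intro mult_mono) (use eps_pos in auto)
  qed
  have sx': "(\<Sum>i<n. x' i) \<le> lam * real n"
  proof -
    have "(\<Sum>i<n. x' i) \<le> lam * OPT" by (rule OPT_scale) (use x'pos mv' lam_pos in \<open>auto simp: less_imp_le\<close>)
    also have "\<dots> \<le> lam * real n" using OPT_le_n lam_pos by simp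
    finally show ?thesis .
  qed
  have mvnew: "matvec A n x' j \<le> 1 + 9/10 * eps" if j: "j < m" for j
  proof -
    have "\<mu> * pp x' j \<le> \<mu> * (\<Sum>j<m. pp x' j)" using mu_pos j pp_pos
      by (intro mult_left_mono member_le_sum) (auto simp: less_imp_le)
    also have "\<dots> \<le> (\<Sum>i<n. x' i)" using fx' unfolding fF_def by simp
    also have "\<dots> \<le> lam * real n" by (rule sx')
    finally have pb: "pp x' j \<le> lam * real n / \<mu>" using mu_pos by (simp add: field_simps)
    have mono: "\<And>a b. a \<le> b \<Longrightarrow> \<mu> * a \<le> \<mu> * b" using mu_pos by (simp add: mult_left_mono)
    have "ln (pp x' j) = (matvec A n x' j - 1) / \<mu>" unfolding pvec_def by simp
    hence "matvec A n x' j - 1 = \<mu> * ln (pp x' j)" using mu_pos by (simp add: field_simps)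
    also have "\<dots> \<le> \<mu> * ln (lam * real n / \<mu>)"
    proof -
      have pos: "0 < lam * real n / \<mu>" using pb pp_pos[of x' j] by linarith
      have "ln (pp x' j) \<le> ln (lam * real n / \<mu>)" using pos pp_pos[of x' j] pb by simp
      thus ?thesis using mu_pos by (intro mult_left_mono) auto
    qed
    also have "lam * real n / \<mu> = (real n / eps) * (4 * lam * LL)"
    proof -
      have "4 * LL / eps = 1 / \<mu>" using eps_mu mu_pos eps_pos by (simp add: field_simps)
      moreover have "(real n / eps) * (4 * lam * LL) = lam * real n * (4 * LL / eps)" by (simp add: field_simps)
      ultimately show ?thesis by simp
    qed
    also have "ln \<dots> = ln (real n / eps) + ln (4 * lam * LL)"
      using n_pos eps_pos lam_pos LL_pos by (intro ln_mult_pos) (auto intro!: divide_pos_pos mult_pos_pos)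
    also have "\<dots> \<le> LL + (4 * lam * LL) / exp 1"
    proof -
      have "ln (real n / eps) \<le> LL" unfolding LL_def using n_pos m_pos eps_pos
        by (subst ln_le_cancel_iff) (auto simp: divide_right_mono)
      moreover have "ln (4 * lam * LL) \<le> (4 * lam * LL) / exp 1" using lam_pos LL_pos by (intro ln_le_div_e) auto
      ultimately show ?thesis by linarith
    qed
    also have "\<mu> * (LL + (4 * lam * LL) / exp 1) = (eps / 4) * (1 + 4 * lam / exp 1)"
      using mu_LL by (simp add: field_simps)
    also have "\<dots> \<le> 9/10 * eps"
    proof -
      have "4 * lam / exp 1 \<le> 4 * ((6481/6400) * (29/20)) / (64/27)"
        using lam_le exp_ge_e lam_pos by (intro frac_le) auto
      also have "\<dots> \<le> 26/10" by simp
      finally show ?thesis using eps_pos by simp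
    qed
    finally have "matvec A n x' j - 1 \<le> 9/10 * eps" using mono by blast
    thus ?thesis by simp
  qed
  show ?thesis unfolding Inv_def x'_def[symmetric] using x'pos fx' mvnew by auto
qed


lemma mono_se:
  fixes c s0 s :: real
  assumes "0 < c" "c \<le> s0" "s0 \<le> s"
  shows "s * exp (- s / c) \<le> s0 * exp (- s0 / c)"
proof -
  have s0: "0 < s0" using assms by linarith
  have "(s - s0) / s0 \<le> (s - s0) / c" using assms by (intro divide_left_mono) auto
  moreover have "1 + (s - s0) / c \<le> exp ((s - s0) / c)" by (rule exp_ge_add_one_self)
  moreover have "s = s0 * (1 + (s - s0) / s0)" using s0 by (simp add: field_simps)
  ultimately have "s \<le> s0 * exp ((s - s0) / c)" using s0
    by (smt (verit, best) mult_left_mono)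
  hence "s * exp (- s / c) \<le> s0 * exp ((s - s0) / c) * exp (- s / c)"
    by (intro mult_right_mono) auto
  also have "\<dots> = s0 * exp (- s0 / c)" by (simp add: mult.assoc exp_add[symmetric] diff_divide_distrib)
  finally show ?thesis .
qed

lemma row_waste:
  assumes j: "j < m" and xnn: "\<forall>i<n. 0 \<le> x i"
  shows "pp x j * (1 - matvec A n x j) \<le> (eps/2) * pp x j + (eps/2) * exp (-2 * LL)"
proof (cases "1 - matvec A n x j \<le> eps/2")
  case True
  hence "pp x j * (1 - matvec A n x j) \<le> pp x j * (eps/2)" using pp_pos[of x j] by (intro mult_left_mono) auto
  moreover have "0 \<le> (eps/2) * exp (-2 * LL)" using eps_pos by simp
  ultimately show ?thesis by (simp add: mult.commute)
next
  case False
  define s where "s = 1 - matvec A n x j"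
  have ppe: "pp x j = exp (- s / \<mu>)" unfolding pvec_def s_def by (simp add: field_simps)
  have "s * exp (- s / \<mu>) \<le> (eps/2) * exp (- (eps/2) / \<mu>)"
    by (rule mono_se) (use mu_pos mu_le False s_def in auto)
  also have "- (eps/2) / \<mu> = -2 * LL" using eps_mu by (simp add: field_simps)
  finally have "pp x j * s \<le> (eps/2) * exp (-2 * LL)" unfolding ppe by (simp add: mult.commute)
  moreover have "0 \<le> (eps/2) * pp x j" using eps_pos pp_pos[of x j] by simp
  ultimately show ?thesis unfolding s_def by linarith
qed

lemma waste:
  assumes xnn: "\<forall>i<n. 0 \<le> x i"
  shows "(\<Sum>j<m. pp x j * (1 - matvec A n x j)) \<le> (eps/2) * (\<Sum>j<m. pp x j) + eps^3 / 2"
proof -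
  have "(\<Sum>j<m. pp x j * (1 - matvec A n x j)) \<le> (\<Sum>j<m. (eps/2) * pp x j + (eps/2) * exp (-2 * LL))"
    using row_waste[OF _ xnn] by (intro sum_mono) auto
  also have "\<dots> = (eps/2) * (\<Sum>j<m. pp x j) + (eps/2) * (real m * exp (-2 * LL))"
    by (simp add: sum.distrib sum_distrib_left)
  also have "real m * exp (-2 * LL) \<le> eps^2"
  proof -
    have "real m * exp (-2 * LL) = eps^2 / (real n * real n * real m)"
      unfolding exp_m2LL using m_pos by (simp add: power2_eq_square field_simps)
    also have "\<dots> \<le> eps^2 / 1" using nm_ge1 n_pos m_pos
      by (intro divide_left_mono) (auto simp: mult_pos_pos, metis mult_le_mono nat_mult_1 of_nat_1 of_nat_le_iff of_nat_mult One_nat_def Suc_leI mult.assoc)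
    finally show ?thesis by simp
  qed
  hence "(eps/2) * (real m * exp (-2 * LL)) \<le> (eps/2) * eps^2" using eps_pos by (intro mult_left_mono) auto
  finally show ?thesis by (simp add: power2_eq_square power3_eq_cube)
qed


definition "Psi x = (1/\<alpha>) * (\<Sum>i<n. x i) + (4 * (1 + \<alpha>) / (3 * \<alpha>)) * fF x"
definition "Phi x = (real ww / (1 - eps/2)) * Psi x"
definition "Kc = ((1 + eps) * (1 + 9/10 * eps) * OPT + eps^3 / 2) / (1 - eps/2)"

lemma per_t:
  assumes I: "Inv x"
  shows "(\<Sum>i<n. vbk t x i * x i) + (\<Sum>i<n. gg x i * vbk t x i * x i) \<le> Psi x - Psi (alg_step A m n eps t x)"
proof -
  define x' where "x' = alg_step A m n eps t x"
  have x'e: "x' = (\<lambda>i. x i * exp (- \<alpha> * vbk t x i))" unfolding x'_def step_eq ..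
  have xpos: "\<forall>i<n. 0 < x i" and mvx: "\<forall>j<m. matvec A n x j \<le> 1 + 9/10 * eps"
    using I unfolding Inv_def by auto
  have al: "0 < \<alpha>" "\<alpha> \<le> 1/80" using alpha_pos alpha_le by auto
  have mvb: "\<forall>j<m. matvec A n x j \<le> 3/2" using mvx eps_le by (auto intro: order_trans)
  define Q where "Q = (\<Sum>i<n. gg x i * vbk t x i * x i)"
  define M where "M = (\<Sum>i<n. vbk t x i * x i)"
  have desc: "fF x' \<le> fF x - (3/4) * \<alpha> * Q"
    unfolding x'e Q_def by (rule descent[OF xpos mvb]) (use vbk_p in auto)
  have mir: "(\<Sum>i<n. x' i) \<le> (\<Sum>i<n. x i) - \<alpha> * M + \<alpha>^2 * (\<Sum>i<n. (vbk t x i)^2 * x i)"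
    unfolding x'e M_def by (rule mirror[OF xpos]) (use vbk_p in auto)
  have "(\<Sum>i<n. (vbk t x i)^2 * x i) \<le> Q" unfolding Q_def
    using vbk_p(3) xpos by (intro sum_mono mult_right_mono) (auto simp: less_imp_le)
  hence "\<alpha>^2 * (\<Sum>i<n. (vbk t x i)^2 * x i) \<le> \<alpha>^2 * Q" by (intro mult_left_mono) auto
  hence "\<alpha> * M \<le> (\<Sum>i<n. x i) - (\<Sum>i<n. x' i) + \<alpha> * (\<alpha> * Q)" using mir by (simp add: power2_eq_square)
  hence M1: "M \<le> (1/\<alpha>) * ((\<Sum>i<n. x i) - (\<Sum>i<n. x' i)) + \<alpha> * Q"
    using al by (simp add: field_simps)
  have "(3/4) * \<alpha> * Q \<le> fF x - fF x'" using desc by linarith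
  hence Q1: "Q \<le> (4 / (3 * \<alpha>)) * (fF x - fF x')" using al by (simp add: field_simps)
  have "(1 + \<alpha>) * Q \<le> (1 + \<alpha>) * ((4 / (3 * \<alpha>)) * (fF x - fF x'))" using Q1 al by (intro mult_left_mono) auto
  hence "M + Q \<le> (1/\<alpha>) * ((\<Sum>i<n. x i) - (\<Sum>i<n. x' i)) + (1 + \<alpha>) * ((4 / (3 * \<alpha>)) * (fF x - fF x'))"
    using M1 by (simp add: algebra_simps)
  also have "\<dots> = Psi x - Psi x'" unfolding Psi_def using al(1) by (simp add: field_simps)
  finally show ?thesis unfolding M_def Q_def x'_def .
qed

lemma per_x:
  assumes I: "Inv x"
  shows "(\<Sum>j<m. pp x j) \<le> Kc + (1 / real ww) * (\<Sum>t<ww. Phi x - Phi (alg_step A m n eps t x))"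
proof -
  have xpos: "\<forall>i<n. 0 < x i" and mvx: "\<forall>j<m. matvec A n x j \<le> 1 + 9/10 * eps"
    using I unfolding Inv_def by auto
  have xnn: "\<forall>i<n. 0 \<le> x i" using xpos by (simp add: less_imp_le)
  define xs where "xs = (\<Sum>i<n. x i)"
  define S where "S = (\<Sum>j<m. pp x j)"
  define D where "D = (\<Sum>t<ww. Psi x - Psi (alg_step A m n eps t x))"
  have w: "1 \<le> ww" using w_props by simp
  have e1: "S = (\<Sum>j<m. pp x j * matvec A n x j) + (\<Sum>j<m. pp x j * (1 - matvec A n x j))"
    unfolding S_def by (simp add: sum.distrib[symmetric] algebra_simps)
  have e2: "(\<Sum>j<m. pp x j * matvec A n x j) = (\<Sum>i<n. x i * (1 + gg x i))"
    unfolding matvec_def gg_eq by (rule swap_sum)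
  have e3: "(\<Sum>i<n. x i * (1 + gg x i)) \<le> (\<Sum>i<n. x i + (xi_trunc eps (gg x i) * x i + eps * x i + gg x i * xi_trunc eps (gg x i) * x i))"
  proof (rule sum_mono)
    fix i assume "i \<in> {..<n}"
    hence i: "i < n" by simp
    have "x i * gg x i \<le> x i * (xi_trunc eps (gg x i) + eps + gg x i * xi_trunc eps (gg x i))"
      using xi_p(4)[OF i, of x] xpos i by (intro mult_left_mono) auto
    thus "x i * (1 + gg x i) \<le> x i + (xi_trunc eps (gg x i) * x i + eps * x i + gg x i * xi_trunc eps (gg x i) * x i)"
      by (simp add: algebra_simps)
  qed
  have e4: "(\<Sum>i<n. x i + (xi_trunc eps (gg x i) * x i + eps * x i + gg x i * xi_trunc eps (gg x i) * x i))
     = (1 + eps) * xs + (\<Sum>t<ww. (\<Sum>i<n. vbk t x i * x i) + (\<Sum>i<n. gg x i * vbk t x i * x i))"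
  proof -
    have a: "(\<Sum>i<n. xi_trunc eps (gg x i) * x i) = (\<Sum>t<ww. \<Sum>i<n. vbk t x i * x i)"
    proof -
      have "(\<Sum>i<n. xi_trunc eps (gg x i) * x i) = (\<Sum>i<n. \<Sum>t<ww. vbk t x i * x i)"
      proof (rule sum.cong[OF refl])
        fix i assume "i \<in> {..<n}"
        hence i: "i < n" by simp
        have "xi_trunc eps (gg x i) * x i = (\<Sum>t<ww. vbk t x i) * x i" using vbk_sum[OF i, of x] by simp
        thus "xi_trunc eps (gg x i) * x i = (\<Sum>t<ww. vbk t x i * x i)" by (simp add: sum_distrib_right)
      qed
      also have "\<dots> = (\<Sum>t<ww. \<Sum>i<n. vbk t x i * x i)" by (rule sum.swap)
      finally show ?thesis .
    qed
    have b: "(\<Sum>i<n. gg x i * xi_trunc eps (gg x i) * x i) = (\<Sum>t<ww. \<Sum>i<n. gg x i * vbk t x i * x i)"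
    proof -
      have "(\<Sum>i<n. gg x i * xi_trunc eps (gg x i) * x i) = (\<Sum>i<n. \<Sum>t<ww. gg x i * vbk t x i * x i)"
      proof (rule sum.cong[OF refl])
        fix i assume "i \<in> {..<n}"
        hence i: "i < n" by simp
        have "gg x i * xi_trunc eps (gg x i) * x i = gg x i * (\<Sum>t<ww. vbk t x i) * x i" using vbk_sum[OF i, of x] by simp
        thus "gg x i * xi_trunc eps (gg x i) * x i = (\<Sum>t<ww. gg x i * vbk t x i * x i)"
          by (simp add: sum_distrib_right sum_distrib_left)
      qed
      also have "\<dots> = (\<Sum>t<ww. \<Sum>i<n. gg x i * vbk t x i * x i)" by (rule sum.swap)
      finally show ?thesis .
    qed
    show ?thesis unfolding xs_def using a b
      by (simp add: sum.distrib sum_distrib_left algebra_simps)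
  qed
  have e5: "(\<Sum>t<ww. (\<Sum>i<n. vbk t x i * x i) + (\<Sum>i<n. gg x i * vbk t x i * x i)) \<le> D"
    unfolding D_def using per_t[OF I] by (intro sum_mono) auto
  have wst: "(\<Sum>j<m. pp x j * (1 - matvec A n x j)) \<le> (eps/2) * S + eps^3/2"
    unfolding S_def by (rule waste[OF xnn])
  have xsb: "xs \<le> (1 + 9/10 * eps) * OPT" unfolding xs_def
    by (rule OPT_scale[OF xnn]) (use eps_pos mvx in auto)
  have "(1 + eps) * xs \<le> (1 + eps) * ((1 + 9/10 * eps) * OPT)" using xsb eps_pos by (intro mult_left_mono) auto
  hence "(1 - eps/2) * S \<le> (1 + eps) * (1 + 9/10 * eps) * OPT + eps^3/2 + D"
    using e1 e2 e3 e4 e5 wst by (simp add: algebra_simps)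
  hence "S \<le> ((1 + eps) * (1 + 9/10 * eps) * OPT + eps^3/2 + D) / (1 - eps/2)"
    using eps_le by (simp add: field_simps)
  also have "\<dots> = Kc + (1 / real ww) * (\<Sum>t<ww. Phi x - Phi (alg_step A m n eps t x))"
  proof -
    have "(\<Sum>t<ww. Phi x - Phi (alg_step A m n eps t x)) = (real ww / (1 - eps/2)) * D"
      unfolding Phi_def D_def by (simp add: sum_distrib_left algebra_simps)
    hence "(1 / real ww) * (\<Sum>t<ww. Phi x - Phi (alg_step A m n eps t x)) = D / (1 - eps/2)"
      using w by simp
    moreover have "((1 + eps) * (1 + 9/10 * eps) * OPT + eps^3/2 + D) / (1 - eps/2) = Kc + D / (1 - eps/2)"
      unfolding Kc_def by (simp add: add_divide_distrib)
    ultimately show ?thesis by simp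
  qed
  finally show ?thesis unfolding S_def .
qed


lemma iter_eq: "alg_iter A m n eps ts k = itr (alg_step A m n eps) x0 ts k"
  by (induction k) auto

definition "Lb = - (real ww / (1 - eps/2)) * (4 * (1 + \<alpha>) / (3 * \<alpha>)) * ((1 + 9/10 * eps) * OPT)"

lemma cpos: "0 < 4 * (1 + \<alpha>) / (3 * \<alpha>)" using alpha_pos by simp
lemma wfac: "0 < real ww / (1 - eps/2)" using w_props eps_le by simp

lemma phi_lb: assumes "Inv x" shows "Lb \<le> Phi x"
proof -
  have xnn: "\<forall>i<n. 0 \<le> x i" and mvx: "\<forall>j<m. matvec A n x j \<le> 1 + 9/10 * eps"
    using assms unfolding Inv_def by (auto simp: less_imp_le)
  have xs: "(\<Sum>i<n. x i) \<le> (1 + 9/10 * eps) * OPT" by (rule OPT_scale[OF xnn]) (use eps_pos mvx in auto)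
  have s0: "0 \<le> (\<Sum>i<n. x i)" using xnn by (intro sum_nonneg) auto
  have "- ((1 + 9/10 * eps) * OPT) \<le> fF x" using fF_lb[OF xnn] xs by linarith
  hence "(4 * (1 + \<alpha>) / (3 * \<alpha>)) * (- ((1 + 9/10 * eps) * OPT)) \<le> (4 * (1 + \<alpha>) / (3 * \<alpha>)) * fF x"
    using cpos by (intro mult_left_mono) auto
  moreover have "0 \<le> (1/\<alpha>) * (\<Sum>i<n. x i)" using s0 alpha_pos by simp
  ultimately have "(4 * (1 + \<alpha>) / (3 * \<alpha>)) * (- ((1 + 9/10 * eps) * OPT)) \<le> Psi x" unfolding Psi_def by linarith
  hence "(real ww / (1 - eps/2)) * ((4 * (1 + \<alpha>) / (3 * \<alpha>)) * (- ((1 + 9/10 * eps) * OPT))) \<le> Phi x"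
    unfolding Phi_def using wfac by (intro mult_left_mono) auto
  thus ?thesis unfolding Lb_def by (simp add: mult_ac)
qed

lemma phi_x0: "Phi x0 - Lb \<le> (real ww / (1 - eps/2)) * ((1/\<alpha>) * (1 + (4 * (1 + \<alpha>) / 3) * ((1 + 9/10 * eps) * OPT)))"
proof -
  define Wf where "Wf = real ww / (1 - eps/2)"
  define c where "c = 4 * (1 + \<alpha>) / (3 * \<alpha>)"
  define V where "V = (1 + 9/10 * eps) * OPT"
  have "Psi x0 \<le> (1/\<alpha>) * 1 + (4 * (1 + \<alpha>) / (3 * \<alpha>)) * 0"
    unfolding Psi_def using x0_sum_le f_x0 cpos alpha_pos
    by (intro add_mono mult_left_mono mult_left_mono_neg) (auto intro: mult_nonpos_nonneg simp: mult_le_0_iff)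
  hence "Psi x0 \<le> 1/\<alpha>" by simp
  hence "Wf * Psi x0 \<le> Wf * (1/\<alpha>)" unfolding Wf_def using wfac by (intro mult_left_mono) auto
  hence a: "Phi x0 \<le> Wf * (1/\<alpha>)" unfolding Phi_def Wf_def .
  have b: "- Lb = Wf * (c * V)" unfolding Lb_def Wf_def c_def V_def by (simp add: mult_ac)
  have eq1: "(1/\<alpha>) * (1 + (4 * (1 + \<alpha>) / 3) * V) = 1/\<alpha> + c * V"
    unfolding c_def using alpha_pos by (simp add: field_simps)
  have "Wf * ((1/\<alpha>) * (1 + (4 * (1 + \<alpha>) / 3) * V)) = Wf * (1/\<alpha>) + Wf * (c * V)"
    unfolding eq1 by (simp add: distrib_left)
  hence "Phi x0 - Lb \<le> Wf * ((1/\<alpha>) * (1 + (4 * (1 + \<alpha>) / 3) * V))" using a b by linarith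
  thus ?thesis unfolding Wf_def V_def .
qed

lemma main:
  assumes T: "real T \<ge> 6 * real ww / (\<alpha> * eps)"
  shows "expected_ybar_total A m n eps T \<le> (1 + 5 * eps) * OPT"
proof -
  have al: "0 < \<alpha>" "\<alpha> \<le> 1/80" using alpha_pos alpha_le by auto
  have w: "1 \<le> ww" using w_props by simp
  have "0 < 6 * real ww / (\<alpha> * eps)" using w al eps_pos by (intro divide_pos_pos mult_pos_pos) auto
  hence Tpos: "0 < real T" using T by linarith
  define F where "F x = (\<Sum>j<m. pp x j)" for x
  have ybar: "ybar_total A m n eps T ts = (1 / real T) * (\<Sum>k<T. F (itr (alg_step A m n eps) x0 ts k))" for ts
  proof -
    have "ybar_total A m n eps T ts = (\<Sum>j<m. (1 / real T) * (\<Sum>k<T. pp (itr (alg_step A m n eps) x0 ts k) j))"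
      unfolding ybar_total_def iter_eq ..
    also have "\<dots> = (1 / real T) * (\<Sum>j<m. \<Sum>k<T. pp (itr (alg_step A m n eps) x0 ts k) j)"
      by (rule sum_distrib_left[symmetric])
    also have "(\<Sum>j<m. \<Sum>k<T. pp (itr (alg_step A m n eps) x0 ts k) j) = (\<Sum>k<T. F (itr (alg_step A m n eps) x0 ts k))"
      unfolding F_def by (rule sum.swap)
    finally show ?thesis .
  qed
  have avg: "(\<Sum>ts\<in>seqs ww T. \<Sum>k<T. F (itr (alg_step A m n eps) x0 ts k)) \<le> real ww ^ T * (real T * Kc + Phi x0 - Lb)"
    by (rule avg_main[where I = Inv]) (use w inv_step per_x phi_lb inv_x0 in \<open>auto simp: F_def\<close>)
  have "expected_ybar_total A m n eps T = (\<Sum>ts\<in>seqs ww T. ybar_total A m n eps T ts) / real ww ^ T"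
    unfolding expected_ybar_total_def seqs_def ..
  also have "\<dots> = ((1 / real T) * (\<Sum>ts\<in>seqs ww T. \<Sum>k<T. F (itr (alg_step A m n eps) x0 ts k))) / real ww ^ T"
    unfolding ybar by (simp add: sum_distrib_left)
  also have "\<dots> \<le> ((1 / real T) * (real ww ^ T * (real T * Kc + Phi x0 - Lb))) / real ww ^ T"
    using avg Tpos w by (intro divide_right_mono mult_left_mono) auto
  also have "\<dots> = Kc + (Phi x0 - Lb) / real T" using Tpos w by (simp add: field_simps)
  also have "(Phi x0 - Lb) / real T \<le> (eps/6)/(1 - eps/2) * (1 + (4 * (1 + \<alpha>) / 3) * ((1 + 9/10 * eps) * OPT))"
  proof -
    define B where "B = 1 + (4 * (1 + \<alpha>) / 3) * ((1 + 9/10 * eps) * OPT)"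
    have B0: "0 \<le> B" unfolding B_def using OPT_ge1 eps_pos al by (intro add_nonneg_nonneg mult_nonneg_nonneg) auto
    have "(Phi x0 - Lb) / real T \<le> ((real ww / (1 - eps/2)) * ((1/\<alpha>) * B)) / real T"
      using phi_x0 Tpos unfolding B_def by (intro divide_right_mono) auto
    also have "\<dots> = (real ww / (\<alpha> * real T)) * (B / (1 - eps/2))" by (simp add: field_simps)
    also have "\<dots> \<le> (eps/6) * (B / (1 - eps/2))"
    proof (rule mult_right_mono)
      have "6 * real ww \<le> real T * (\<alpha> * eps)" using T al eps_pos by (simp add: divide_le_eq)
      thus "real ww / (\<alpha> * real T) \<le> eps / 6" using al Tpos by (simp add: divide_le_eq field_simps)
      show "0 \<le> B / (1 - eps/2)" using B0 eps_le by simp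
    qed
    finally show ?thesis unfolding B_def by (simp add: mult_ac)
  qed
  also have "Kc + (eps/6)/(1 - eps/2) * (1 + (4 * (1 + \<alpha>) / 3) * ((1 + 9/10 * eps) * OPT)) \<le> (1 + 5 * eps) * OPT"
    unfolding Kc_def using final_arith[OF eps_pos eps_le al OPT_ge1] by (simp add: mult_ac)
  finally show ?thesis by simp
qed

end


theorem lemma4p1:
  fixes A :: "nat \<Rightarrow> nat \<Rightarrow> real" and m n T :: nat and \<epsilon> :: real
  assumes "0 < m" and "0 < n"
    and "\<forall>j<m. \<forall>i<n. 0 \<le> A j i"
    and "\<forall>i<n. \<exists>j<m. A j i \<noteq> 0"
    and "Min (colnorm A m ` {..<n}) = 1"
    and "0 < \<epsilon>" and "\<epsilon> \<le> 1 / 2"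
    and "real T \<ge> 6 * real (wpar \<epsilon>) / (alpha n m \<epsilon> * \<epsilon>)"
  shows "expected_ybar_total A m n \<epsilon> T \<le> (1 + 5 * \<epsilon>) * packing_OPT A m n"
proof -
  interpret pk A m n \<epsilon>
    using assms(1-7) by unfold_locales auto
  show ?thesis by (rule main[OF assms(8)])
qed

end
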